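(* Let $q=2^m$ and let $f:\mathbb{F}_q\to\mathbb{F}_q$ be a function. The following two properties are equivalent: (i) there exist $\alpha,\beta\in\mathbb{F}_q$ and six distinct elements $x_0,x_1,x_2,x_3,x_4,x_5\in\mathbb{F}_q$ such that $$x_0+x_1=\alpha,\ f(x_0)+f(x_1)=\beta;\quad x_2+x_3=\alpha,\ f(x_2)+f(x_3)=\beta;\quad x_4+x_5=\alpha,\ f(x_4)+f(x_5)=\beta;$$ (ii) there exist four distinct elements $x_0,x_1,x_2,x_4\in\mathbb{F}_q$ with $x_0+x_1+x_2+x_4\neq 0$ such that $$f(x_0)+f(x_1)+f(x_2)+f(x_0+x_1+x_2)=0\quad\text{and}\quad f(x_0)+f(x_1)+f(x_4)+f(x_0+x_1+x_4)=0.$$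
   Context: $\mathbb{F}_q$ denotes the finite field with $q=2^m$ elements (characteristic 2). *)

theory Defs
  imports Main
begin

end

theory Submission
  imports Defs
begin

lemma char2_dbl:
  assumes "CHAR('a::field) = 2"
  shows "(x::'a) + x = 0"
proof -
  have "(of_nat CHAR('a) :: 'a) = 0" by (rule of_nat_CHAR)
  hence two: "(2::'a) = 0" using assms by simp
  have "x + x = 2 * x" by (rule mult_2[symmetric])
  also have "\<dots> = 0 * x" by (subst two) (rule refl)
  also have "\<dots> = 0" by (rule mult_zero_left)
  finally show ?thesis .
qed

theorem lemma2p1:
  fixes f :: "'a::{field,finite} \<Rightarrow> 'a" and m :: nat
  assumes "card (UNIV :: 'a set) = 2 ^ m"
    and "CHAR('a) = 2"
  shows "(\<exists>\<alpha> \<beta> x0 x1 x2 x3 x4 x5.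
            distinct [x0, x1, x2, x3, x4, x5] \<and>
            x0 + x1 = \<alpha> \<and> f x0 + f x1 = \<beta> \<and>
            x2 + x3 = \<alpha> \<and> f x2 + f x3 = \<beta> \<and>
            x4 + x5 = \<alpha> \<and> f x4 + f x5 = \<beta>)
     \<longleftrightarrow>
         (\<exists>x0 x1 x2 x4.
            distinct [x0, x1, x2, x4] \<and> x0 + x1 + x2 + x4 \<noteq> 0 \<and>
            f x0 + f x1 + f x2 + f (x0 + x1 + x2) = 0 \<and>
            f x0 + f x1 + f x4 + f (x0 + x1 + x4) = 0)"
proof -
  have D: "\<And>x::'a. x + x = 0" using char2_dbl[OF assms(2)] .
  have N: "\<And>x::'a. - x = x" using D by (metis add_eq_0_iff)
  have M: "\<And>a b::'a. a - b = a + b" using N by (metis diff_conv_add_uminus)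
  have E: "\<And>a b::'a. (a + b = 0) = (a = b)"
    by (metis M eq_iff_diff_eq_0)
  have S: "\<And>a b c::'a. (a + b = c) = (a = c + b)"
    by (metis M add_diff_cancel_right')
  show ?thesis
  proof
    assume "\<exists>\<alpha> \<beta> x0 x1 x2 x3 x4 x5.
            distinct [x0, x1, x2, x3, x4, x5] \<and>
            x0 + x1 = \<alpha> \<and> f x0 + f x1 = \<beta> \<and>
            x2 + x3 = \<alpha> \<and> f x2 + f x3 = \<beta> \<and>
            x4 + x5 = \<alpha> \<and> f x4 + f x5 = \<beta>"
    then obtain x0 x1 x2 x3 x4 x5 where d: "distinct [x0, x1, x2, x3, x4, x5]"
      and h1: "x2 + x3 = x0 + x1" and h2: "f x2 + f x3 = f x0 + f x1"
      and h3: "x4 + x5 = x0 + x1" and h4: "f x4 + f x5 = f x0 + f x1" by metis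
    have x3: "x3 = x0 + x1 + x2"
    proof -
      have "x3 + x2 = x0 + x1" using h1 by (simp add: add.commute)
      thus ?thesis using S by blast
    qed
    have x5: "x5 = x0 + x1 + x4"
    proof -
      have "x5 + x4 = x0 + x1" using h3 by (simp add: add.commute)
      thus ?thesis using S by blast
    qed
    have "x0 + x1 + x2 + x4 \<noteq> 0"
    proof
      assume "x0 + x1 + x2 + x4 = 0"
      hence "x0 + x1 + x2 = x4" using E[of "x0 + x1 + x2" x4] by simp
      thus False using d x3 by auto
    qed
    moreover have "f x0 + f x1 + f x2 + f (x0 + x1 + x2) = 0"
    proof -
      have "f x0 + f x1 + f x2 + f (x0 + x1 + x2) = (f x0 + f x1) + (f x2 + f x3)"
        using x3 by (simp add: add.assoc)
      thus ?thesis using h2 D by simp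
    qed
    moreover have "f x0 + f x1 + f x4 + f (x0 + x1 + x4) = 0"
    proof -
      have "f x0 + f x1 + f x4 + f (x0 + x1 + x4) = (f x0 + f x1) + (f x4 + f x5)"
        using x5 by (simp add: add.assoc)
      thus ?thesis using h4 D by simp
    qed
    moreover have "distinct [x0, x1, x2, x4]" using d by auto
    ultimately show "\<exists>x0 x1 x2 x4.
            distinct [x0, x1, x2, x4] \<and> x0 + x1 + x2 + x4 \<noteq> 0 \<and>
            f x0 + f x1 + f x2 + f (x0 + x1 + x2) = 0 \<and>
            f x0 + f x1 + f x4 + f (x0 + x1 + x4) = 0"
      by (intro exI[of _ x0] exI[of _ x1] exI[of _ x2] exI[of _ x4] conjI)
  next
    assume "\<exists>x0 x1 x2 x4.
            distinct [x0, x1, x2, x4] \<and> x0 + x1 + x2 + x4 \<noteq> 0 \<and>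
            f x0 + f x1 + f x2 + f (x0 + x1 + x2) = 0 \<and>
            f x0 + f x1 + f x4 + f (x0 + x1 + x4) = 0"
    then obtain x0 x1 x2 x4 where d: "distinct [x0, x1, x2, x4]"
      and nz: "x0 + x1 + x2 + x4 \<noteq> 0"
      and g1: "f x0 + f x1 + f x2 + f (x0 + x1 + x2) = 0"
      and g2: "f x0 + f x1 + f x4 + f (x0 + x1 + x4) = 0" by blast
    define x3 where "x3 = x0 + x1 + x2"
    define x5 where "x5 = x0 + x1 + x4"
    have ne: "\<And>a b c::'a. a \<noteq> b \<Longrightarrow> a + b + c \<noteq> c"
    proof
      fix a b c :: 'a assume "a \<noteq> b" "a + b + c = c"
      hence "a + b = 0" by (metis add_cancel_left_left)
      thus False using E[of a b] \<open>a \<noteq> b\<close> by simp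
    qed
    have "x3 \<noteq> x0"
    proof -
      have "x3 = x1 + x2 + x0" unfolding x3_def by (simp add: ac_simps)
      thus ?thesis using ne[of x1 x2 x0] d by simp
    qed
    moreover have "x3 \<noteq> x1"
    proof -
      have "x3 = x0 + x2 + x1" unfolding x3_def by (simp add: ac_simps)
      thus ?thesis using ne[of x0 x2 x1] d by simp
    qed
    moreover have "x3 \<noteq> x2" using ne[of x0 x1 x2] d unfolding x3_def by simp
    moreover have "x5 \<noteq> x0"
    proof -
      have "x5 = x1 + x4 + x0" unfolding x5_def by (simp add: ac_simps)
      thus ?thesis using ne[of x1 x4 x0] d by simp
    qed
    moreover have "x5 \<noteq> x1"
    proof -
      have "x5 = x0 + x4 + x1" unfolding x5_def by (simp add: ac_simps)
      thus ?thesis using ne[of x0 x4 x1] d by simp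
    qed
    moreover have "x5 \<noteq> x4" using ne[of x0 x1 x4] d unfolding x5_def by simp
    moreover have "x3 \<noteq> x4"
    proof
      assume "x3 = x4"
      hence "x0 + x1 + x2 + x4 = x4 + x4" unfolding x3_def by simp
      thus False using nz D by simp
    qed
    moreover have "x5 \<noteq> x2"
    proof -
      have h: "x0 + x1 + x4 + x2 \<noteq> 0" using nz by (simp add: ac_simps)
      show ?thesis
      proof
        assume "x5 = x2"
        hence "x0 + x1 + x4 + x2 = x2 + x2" unfolding x5_def by simp
        thus False using h D by simp
      qed
    qed
    moreover have "x3 \<noteq> x5"
    proof -
      have "x2 + x4 + (x0 + x1 + x4) \<noteq> x0 + x1 + x4" using ne[of x2 x4 "x0 + x1 + x4"] d by simp
      moreover have "x2 + x4 + (x0 + x1 + x4) = x0 + x1 + x2 + (x4 + x4)" by (simp add: ac_simps)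
      ultimately show ?thesis unfolding x3_def x5_def using D by simp
    qed
    ultimately have dd: "distinct [x0, x1, x2, x3, x4, x5]" using d by auto
    have a1: "x2 + x3 = x0 + x1"
    proof -
      have "x2 + x3 = x0 + x1 + (x2 + x2)" unfolding x3_def by (simp add: ac_simps)
      thus ?thesis using D by simp
    qed
    have a2: "x4 + x5 = x0 + x1"
    proof -
      have "x4 + x5 = x0 + x1 + (x4 + x4)" unfolding x5_def by (simp add: ac_simps)
      thus ?thesis using D by simp
    qed
    have b1: "f x2 + f x3 = f x0 + f x1"
    proof -
      have "(f x0 + f x1) + (f x2 + f x3) = 0" using g1 unfolding x3_def by (simp add: add.assoc)
      thus ?thesis using E[of "f x0 + f x1" "f x2 + f x3"] by simp
    qed
    have b2: "f x4 + f x5 = f x0 + f x1"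
    proof -
      have "(f x0 + f x1) + (f x4 + f x5) = 0" using g2 unfolding x5_def by (simp add: add.assoc)
      thus ?thesis using E[of "f x0 + f x1" "f x4 + f x5"] by simp
    qed
    show "\<exists>\<alpha> \<beta> x0 x1 x2 x3 x4 x5.
            distinct [x0, x1, x2, x3, x4, x5] \<and>
            x0 + x1 = \<alpha> \<and> f x0 + f x1 = \<beta> \<and>
            x2 + x3 = \<alpha> \<and> f x2 + f x3 = \<beta> \<and>
            x4 + x5 = \<alpha> \<and> f x4 + f x5 = \<beta>"
      using dd a1 a2 b1 b2
      by (intro exI[of _ "x0 + x1"] exI[of _ "f x0 + f x1"] exI[of _ x0] exI[of _ x1]
           exI[of _ x2] exI[of _ x3] exI[of _ x4] exI[of _ x5] conjI refl)
  qed
qed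

end
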